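(* Let $\mathcal{T}$ be a $K$-decomposition of a matroid $\mathcal{M}$ with rank function $r$, $K\ge1$, and let $v$ be a node of $\mathcal{T}$. Let $E_v$ be the set of elements of $\mathcal{M}$ corresponding to the leaves of the subtree of $\mathcal{T}$ rooted at $v$, and $\overline{E_v}$ the set of the remaining elements. If $F_1,F_2\subseteq E_v$ are such that $v$ receives the same color for $F_1$ as for $F_2$, then for every $F\subseteq\overline{E_v}$, $$r(F)+r(F_1)-r(F\cup F_1)=r(F)+r(F_2)-r(F\cup F_2).$$
   Context: A $K$-decomposition ($K\ge1$ an integer) of a matroid $\mathcal{M}$ is a rooted tree $\mathcal{T}$ such that the leaves of $\mathcal{T}$ correspond one-to-one to the elements of $\mathcal{M}$ and record whether the corresponding element is a loop, and each inner node $v$ has exactly two children and is equipped with functions $\varphi_v:\{0,\dots,K\}^2\to\{0,\dots,K\}$ and $\varphi_v^r:\{0,\dots,K\}^2\to\mathbb{N}$. For a subset $F$ of the ground set, color and label the nodes as follows: a leaf whose element is in $F$ gets color $1$, other leaves color $0$; a leaf whose element is in $F$ and is not a loop gets label $1$, other leaves label $0$; an inner node $v$ whose two children have colors $\gamma_1,\gamma_2$ and labels $\lambda_1,\lambda_2$ gets color $\varphi_v(\gamma_1,\gamma_2)$ and label $\lambda_1+\lambda_2-\varphi_v^r(\gamma_1,\gamma_2)$. It is required that for every $F$ the label of the root equals $r(F)$, and that for $F=\emptyset$ all nodes get color $0$ and label $0$. "The color of $v$ for $F$" means the color given to $v$ by this procedure applied to $F$. *)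

theory Defs
  imports Main
begin

definition matroid :: "'a set \<Rightarrow> ('a set \<Rightarrow> nat) \<Rightarrow> bool" where
  "matroid E r \<longleftrightarrow> finite E
     \<and> (\<forall>A. A \<subseteq> E \<longrightarrow> r A \<le> card A)
     \<and> (\<forall>A B. A \<subseteq> B \<and> B \<subseteq> E \<longrightarrow> r A \<le> r B)
     \<and> (\<forall>A B. A \<subseteq> E \<and> B \<subseteq> E \<longrightarrow> r (A \<union> B) + r (A \<inter> B) \<le> r A + r B)"

definition is_loop :: "('a set \<Rightarrow> nat) \<Rightarrow> 'a \<Rightarrow> bool" where
  "is_loop r e \<longleftrightarrow> r {e} = 0"

text \<open>Decomposition trees: a leaf records an element and whether it is a loop;
  an inner node carries the colour function phi and the rank-correction function phi^r.\<close>
datatype 'a dtree =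
    DLeaf 'a bool
  | DNode "nat \<Rightarrow> nat \<Rightarrow> nat" "nat \<Rightarrow> nat \<Rightarrow> nat" "'a dtree" "'a dtree"

fun leaf_list :: "'a dtree \<Rightarrow> 'a list" where
  "leaf_list (DLeaf e b) = [e]"
| "leaf_list (DNode f g l r) = leaf_list l @ leaf_list r"

abbreviation leaf_elems :: "'a dtree \<Rightarrow> 'a set" where
  "leaf_elems t \<equiv> set (leaf_list t)"

fun leaf_data :: "'a dtree \<Rightarrow> ('a \<times> bool) set" where
  "leaf_data (DLeaf e b) = {(e, b)}"
| "leaf_data (DNode f g l r) = leaf_data l \<union> leaf_data r"

text \<open>All nodes of the tree (each node identified with the subtree rooted at it).\<close>
fun nodes :: "'a dtree \<Rightarrow> 'a dtree set" where
  "nodes (DLeaf e b) = {DLeaf e b}"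
| "nodes (DNode f g l r) = insert (DNode f g l r) (nodes l \<union> nodes r)"

fun inner_funs :: "'a dtree \<Rightarrow> ((nat \<Rightarrow> nat \<Rightarrow> nat) \<times> (nat \<Rightarrow> nat \<Rightarrow> nat)) set" where
  "inner_funs (DLeaf e b) = {}"
| "inner_funs (DNode f g l r) = insert (f, g) (inner_funs l \<union> inner_funs r)"

fun color :: "'a dtree \<Rightarrow> 'a set \<Rightarrow> nat" where
  "color (DLeaf e b) F = (if e \<in> F then 1 else 0)"
| "color (DNode f g l r) F = f (color l F) (color r F)"

fun label :: "'a dtree \<Rightarrow> 'a set \<Rightarrow> int" where
  "label (DLeaf e b) F = (if e \<in> F \<and> \<not> b then 1 else 0)"
| "label (DNode f g l r) F =
     label l F + label r F - int (g (color l F) (color r F))"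

definition K_decomposition :: "nat \<Rightarrow> 'a set \<Rightarrow> ('a set \<Rightarrow> nat) \<Rightarrow> 'a dtree \<Rightarrow> bool" where
  "K_decomposition K E r T \<longleftrightarrow>
     distinct (leaf_list T) \<and> leaf_elems T = E
   \<and> (\<forall>(e, b) \<in> leaf_data T. b = is_loop r e)
   \<and> (\<forall>(f, g) \<in> inner_funs T. \<forall>a \<le> K. \<forall>c \<le> K. f a c \<le> K)
   \<and> (\<forall>F. F \<subseteq> E \<longrightarrow> label T F = int (r F))
   \<and> (\<forall>v \<in> nodes T. color v {} = 0 \<and> label v {} = 0)"

end

theory Submission
  imports Defs
begin

lemma loc:
  "A \<inter> leaf_elems t = B \<inter> leaf_elems t \<Longrightarrow> color t A = color t B \<and> label t A = label t B"
proof (induction t)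
  case (DLeaf e b) then show ?case by auto
next
  case (DNode f g l r)
  have "A \<inter> leaf_elems l = B \<inter> leaf_elems l" "A \<inter> leaf_elems r = B \<inter> leaf_elems r"
    using DNode.prems by auto
  with DNode.IH show ?case by simp
qed

lemma nodes_sub: "v \<in> nodes t \<Longrightarrow> leaf_elems v \<subseteq> leaf_elems t"
  by (induction t) auto

lemma main:
  assumes "v \<in> nodes t" "distinct (leaf_list t)"
    "Y1 \<subseteq> leaf_elems v" "Y2 \<subseteq> leaf_elems v" "color v Y1 = color v Y2"
    "X \<inter> leaf_elems v = {}"
  shows "color t (X \<union> Y1) = color t (X \<union> Y2) \<and> color t Y1 = color t Y2
    \<and> label t (X \<union> Y1) - label t Y1 = label t (X \<union> Y2) - label t Y2"
  using assms
proof (induction t)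
  case (DLeaf e b)
  then have "v = DLeaf e b" by simp
  with DLeaf show ?case by auto
next
  case (DNode f g l r)
  show ?case
  proof (cases "v = DNode f g l r")
    case True
    have a: "(X \<union> Y1) \<inter> leaf_elems v = Y1 \<inter> leaf_elems v"
         "(X \<union> Y2) \<inter> leaf_elems v = Y2 \<inter> leaf_elems v"
      using DNode.prems by auto
    show ?thesis using loc[OF a(1)] loc[OF a(2)] DNode.prems True by simp
  next
    case False
    then have "v \<in> nodes l \<or> v \<in> nodes r" using DNode.prems by simp
    then show ?thesis
    proof
      assume vl: "v \<in> nodes l"
      have dl: "distinct (leaf_list l)" and dj: "leaf_elems l \<inter> leaf_elems r = {}"
        using DNode.prems by auto
      note IH = DNode.IH(1)[OF vl dl DNode.prems(3-6)]
      have sub: "leaf_elems v \<subseteq> leaf_elems l" using nodes_sub[OF vl] .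
      have c1: "color r (X \<union> Y1) = color r X \<and> label r (X \<union> Y1) = label r X"
        by (rule loc) (use sub dj DNode.prems in auto)
      have c2: "color r (X \<union> Y2) = color r X \<and> label r (X \<union> Y2) = label r X"
        by (rule loc) (use sub dj DNode.prems in auto)
      have c3: "color r Y1 = color r {} \<and> label r Y1 = label r {}"
        by (rule loc) (use sub dj DNode.prems in auto)
      have c4: "color r Y2 = color r {} \<and> label r Y2 = label r {}"
        by (rule loc) (use sub dj DNode.prems in auto)
      show ?thesis using IH c1 c2 c3 c4 by simp
    next
      assume vl: "v \<in> nodes r"
      have dl: "distinct (leaf_list r)" and dj: "leaf_elems l \<inter> leaf_elems r = {}"
        using DNode.prems by auto
      note IH = DNode.IH(2)[OF vl dl DNode.prems(3-6)]
      have sub: "leaf_elems v \<subseteq> leaf_elems r" using nodes_sub[OF vl] .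
      have c1: "color l (X \<union> Y1) = color l X \<and> label l (X \<union> Y1) = label l X"
        by (rule loc) (use sub dj DNode.prems in auto)
      have c2: "color l (X \<union> Y2) = color l X \<and> label l (X \<union> Y2) = label l X"
        by (rule loc) (use sub dj DNode.prems in auto)
      have c3: "color l Y1 = color l {} \<and> label l Y1 = label l {}"
        by (rule loc) (use sub dj DNode.prems in auto)
      have c4: "color l Y2 = color l {} \<and> label l Y2 = label l {}"
        by (rule loc) (use sub dj DNode.prems in auto)
      show ?thesis using IH c1 c2 c3 c4 by simp
    qed
  qed
qed

theorem lemma6:
  fixes K :: nat and E :: "'a set" and r :: "'a set \<Rightarrow> nat" and T v :: "'a dtree"
    and F F1 F2 :: "'a set"
  assumes "K \<ge> 1"
    and "matroid E r"
    and "K_decomposition K E r T"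
    and "v \<in> nodes T"
    and "F1 \<subseteq> leaf_elems v" and "F2 \<subseteq> leaf_elems v"
    and "color v F1 = color v F2"
    and "F \<subseteq> E - leaf_elems v"
  shows "int (r F) + int (r F1) - int (r (F \<union> F1))
       = int (r F) + int (r F2) - int (r (F \<union> F2))"
proof -
  have K: "distinct (leaf_list T)" "leaf_elems T = E" "\<forall>F. F \<subseteq> E \<longrightarrow> label T F = int (r F)"
    using assms(3) unfolding K_decomposition_def by auto
  have sub: "leaf_elems v \<subseteq> E" using nodes_sub[OF assms(4)] K(2) by simp
  have "F \<inter> leaf_elems v = {}" using assms(8) by auto
  from main[OF assms(4) K(1) assms(5,6,7) this]
  have "label T (F \<union> F1) - label T F1 = label T (F \<union> F2) - label T F2" by simp
  moreover have "F \<union> F1 \<subseteq> E" "F \<union> F2 \<subseteq> E" "F1 \<subseteq> E" "F2 \<subseteq> E"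
    using assms(5,6,8) sub by auto
  ultimately show ?thesis using K(3) by simp
qed

end
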